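(* Let $\mathbb{I}=\operatorname{diag}(I_1,I_2,I_3)$ with $I_i>0$, let $m>0$, $M>0$, $\bar m=m+M$, $l>0$, $\mathrm{g}>0$, and let $\boldsymbol\chi\in\mathbb{R}^3$ be a unit vector. Consider the reduced Lagrangian $$\ell(\boldsymbol\Omega,\mathbf v,\boldsymbol\Gamma,h)=K(\boldsymbol\Omega,\mathbf v)-\mathrm{g}\,ml\,\boldsymbol\chi\cdot\boldsymbol\Gamma-\mathrm{g}\,\bar m\,h,\qquad K(\boldsymbol\Omega,\mathbf v)=\tfrac12\mathbb{G}_{\alpha\beta}\Omega^\alpha\Omega^\beta+\mathbb{G}_{\alpha b}\Omega^\alpha v^b+\tfrac12\mathbb{G}_{ab}v^av^b,$$ with $(\boldsymbol\Omega,\mathbf v,\boldsymbol\Gamma,h)\in\mathbb{R}^3\times\mathbb{R}^3\times\mathbb{R}^3\times\mathbb{R}$, where the symmetric $6\times6$ matrix $\mathbb{G}$ has blocks $(\mathbb{G}_{\alpha\beta})=\mathbb{I}$, $(\mathbb{G}_{\alpha b})=ml\hat{\boldsymbol\chi}$, $(\mathbb{G}_{a\beta})=-ml\hat{\boldsymbol\chi}$, $(\mathbb{G}_{ab})=\bar m I_{3\times3}$. Let $\rho=(\rho_{ab})$, $\sigma=(\sigma_{ab})$ be invertible constant $3\times 3$ matrices and $\tau=(\tau^a_\alpha)$ a constant $3\times3$ matrix satisfying the matching conditions $$(\mathrm{MC}_1)\ \ \rho_{ab}-\mathbb{G}_{ab}=k\,\delta_{ab}\ \text{for some } k\in\mathbb{R};\qquad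 (\mathrm{MC}_2)\ \ \tau^a_\alpha=(\rho^{ab}-\mathbb{G}^{ab})\mathbb{G}_{b\alpha};\qquad (\mathrm{MC}_3)\ \ \sigma^{ab}=\mathbb{G}^{ab}-\rho^{ab},$$ where upper indices denote entries of inverse matrices (so $(\mathbb{G}^{ab})=(\mathbb{G}_{ab})^{-1}$, $(\rho^{ab})=(\rho_{ab})^{-1}$, $(\sigma^{ab})=(\sigma_{ab})^{-1}$; in particular $\mathbb{G}^{ab}-\rho^{ab}$ is assumed invertible). Define the controlled Lagrangian $$\ell_{\tau,\sigma,\rho}(\boldsymbol\Omega,\mathbf v,\boldsymbol\Gamma)=K_{\tau,\sigma,\rho}(\boldsymbol\Omega,\mathbf v)-\mathrm{g}\,ml\,\boldsymbol\chi\cdot\boldsymbol\Gamma,$$ $$K_{\tau,\sigma,\rho}=K(\Omega^\alpha,\,v^a+\tau^a_\alpha\Omega^\alpha)+\tfrac12\sigma_{ab}\tau^a_\alpha\tau^b_\beta\Omega^\alpha\Omega^\beta+\tfrac12(\rho_{ab}-\mathbb{G}_{ab})\big(v^a+(\mathbb{G}^{ac}\mathbb{G}_{c\alpha}+\tau^a_\alpha)\Omega^\alpha\big)\big(v^b+(\mathbb{G}^{bd}\mathbb{G}_{d\beta}+\tau^b_\beta)\Omega^\beta\big).$$ Consider the controlled equations $$\frac{d}{dt}\frac{\delta\ell}{\delta\boldsymbol\Omega}=\frac{\delta\ell}{\delta\boldsymbol\Omega}\times\boldsymbol\Omega+\frac{\delta\ell}{\delta\mathbf v}\times\mathbf v+\frac{\delta\ell}{\delta\boldsymbol\Gamma}\times\boldsymbol\Gamma,\qquad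 \frac{d}{dt}\frac{\delta\ell}{\delta\mathbf v}=\frac{\delta\ell}{\delta\mathbf v}\times\boldsymbol\Omega+\frac{\delta\ell}{\delta h}\boldsymbol\Gamma+\mathbf u,\qquad \dot{\boldsymbol\Gamma}=\boldsymbol\Gamma\times\boldsymbol\Omega,$$ with the control $$\mathbf u=\frac{d}{dt}\Big(\frac{\delta\ell}{\delta\mathbf v}-\frac{\delta\ell_{\tau,\sigma,\rho}}{\delta\mathbf v}\Big)-\Big(\frac{\delta\ell}{\delta\mathbf v}-\frac{\delta\ell_{\tau,\sigma,\rho}}{\delta\mathbf v}\Big)\times\boldsymbol\Omega+\bar m\,\mathrm{g}\,\boldsymbol\Gamma,$$ and the free equations for the controlled Lagrangian $$\frac{d}{dt}\frac{\delta\ell_{\tau,\sigma,\rho}}{\delta\boldsymbol\Omega}=\frac{\delta\ell_{\tau,\sigma,\rho}}{\delta\boldsymbol\Omega}\times\boldsymbol\Omega+\frac{\delta\ell_{\tau,\sigma,\rho}}{\delta\mathbf v}\times\mathbf v+\frac{\delta\ell_{\tau,\sigma,\rho}}{\delta\boldsymbol\Gamma}\times\boldsymbol\Gamma,\qquad \frac{d}{dt}\frac{\delta\ell_{\tau,\sigma,\rho}}{\delta\mathbf v}=\frac{\delta\ell_{\tau,\sigma,\rho}}{\delta\mathbf v}\times\boldsymbol\Omega,\qquad\dot{\boldsymbol\Gamma}=\boldsymbol\Gamma\times\boldsymbol\Omega.$$ Then a $C^1$ curve $t\mapsto(\boldsymbol\Omega(t),\mathbf v(t),\boldsymbol\Gamma(t))$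 solves the controlled equations with this control if and only if it solves the free equations for $\ell_{\tau,\sigma,\rho}$. (Under $(\mathrm{MC}_1)$, one has $\frac{\delta\ell_{\tau,\sigma,\rho}}{\delta\mathbf v}-\frac{\delta\ell}{\delta\mathbf v}=k\mathbf v$ with $k=\rho_{ab}-\mathbb G_{ab}$ scalar, and $\rho_{ab}=\rho\,\delta_{ab}$ for a scalar $\rho$.)
   Context: Indices: Greek indices $\alpha,\beta\in\{1,2,3\}$ refer to components of $\boldsymbol\Omega$, Latin indices $a,b,c,d\in\{1,2,3\}$ to components of $\mathbf v$; repeated indices are summed. The hat map $\hat{\ }:\mathbb{R}^3\to\mathfrak{so}(3)$ sends $\mathbf x$ to the skew-symmetric matrix with $\hat{\mathbf x}\mathbf y=\mathbf x\times\mathbf y$. For a function $f$ on a vector space, $\delta f/\delta x$ denotes its gradient (partial derivative with respect to the indicated variable, identified with a vector via the dot product); e.g. $\delta\ell/\delta\boldsymbol\Gamma=-\mathrm{g}ml\boldsymbol\chi$ and $\delta\ell/\delta h=-\bar m\mathrm{g}$. Here $\boldsymbol\Omega$ is the body angular velocity of a top on a movable base, $\mathbf v$ the base velocity in the body frame, $\boldsymbol\Gamma$ the vertical upward direction in the body frame and $h$ the base height. *)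

theory Defs
  imports "HOL-Analysis.Analysis" "HOL-Analysis.Cross3"
begin

unbundle cross3_syntax


definition hat :: "real^3 \<Rightarrow> real^3^3" where
  "hat x = vector [vector [0, -(x$3), x$2],
                   vector [x$3, 0, -(x$1)],
                   vector [-(x$2), x$1, 0]]"

definition grad :: "('a::real_inner \<Rightarrow> real) \<Rightarrow> 'a \<Rightarrow> 'a" where
  "grad f x = (THE D. GDERIV f x :> D)"

definition G_OO :: "real \<Rightarrow> real \<Rightarrow> real \<Rightarrow> real^3^3" where
  "G_OO I1 I2 I3 = vector [vector [I1, 0, 0], vector [0, I2, 0], vector [0, 0, I3]]"

definition G_Ov :: "real \<Rightarrow> real \<Rightarrow> real^3 \<Rightarrow> real^3^3" where
  "G_Ov m l chi = (m * l) *\<^sub>R hat chi"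

definition G_vO :: "real \<Rightarrow> real \<Rightarrow> real^3 \<Rightarrow> real^3^3" where
  "G_vO m l chi = - ((m * l) *\<^sub>R hat chi)"

definition G_vv :: "real \<Rightarrow> real \<Rightarrow> real^3^3" where
  "G_vv m M = (m + M) *\<^sub>R mat 1"

definition Kin :: "real \<Rightarrow> real \<Rightarrow> real \<Rightarrow> real \<Rightarrow> real \<Rightarrow> real \<Rightarrow> real^3
                   \<Rightarrow> real^3 \<Rightarrow> real^3 \<Rightarrow> real" where
  "Kin I1 I2 I3 m M l chi Om v =
     1/2 * (Om \<bullet> (G_OO I1 I2 I3 *v Om)) + Om \<bullet> (G_Ov m l chi *v v)
     + 1/2 * (v \<bullet> (G_vv m M *v v))"

definition ell :: "real \<Rightarrow> real \<Rightarrow> real \<Rightarrow> real \<Rightarrow> real \<Rightarrow> real \<Rightarrow> real \<Rightarrow> real^3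
                   \<Rightarrow> real^3 \<Rightarrow> real^3 \<Rightarrow> real^3 \<Rightarrow> real \<Rightarrow> real" where
  "ell I1 I2 I3 m M l g chi Om v Ga h =
     Kin I1 I2 I3 m M l chi Om v - g * m * l * (chi \<bullet> Ga) - g * (m + M) * h"

definition Kin_c :: "real \<Rightarrow> real \<Rightarrow> real \<Rightarrow> real \<Rightarrow> real \<Rightarrow> real \<Rightarrow> real^3
                   \<Rightarrow> real^3^3 \<Rightarrow> real^3^3 \<Rightarrow> real^3^3 \<Rightarrow> real^3 \<Rightarrow> real^3 \<Rightarrow> real" where
  "Kin_c I1 I2 I3 m M l chi \<tau> \<sigma> \<rho> Om v =
     (let w = v + ((matrix_inv (G_vv m M) ** G_vO m l chi) + \<tau>) *v Om
      in Kin I1 I2 I3 m M l chi Om (v + \<tau> *v Om)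
         + 1/2 * ((\<tau> *v Om) \<bullet> (\<sigma> *v (\<tau> *v Om)))
         + 1/2 * (w \<bullet> ((\<rho> - G_vv m M) *v w)))"

definition ell_c :: "real \<Rightarrow> real \<Rightarrow> real \<Rightarrow> real \<Rightarrow> real \<Rightarrow> real \<Rightarrow> real \<Rightarrow> real^3
                   \<Rightarrow> real^3^3 \<Rightarrow> real^3^3 \<Rightarrow> real^3^3 \<Rightarrow> real^3 \<Rightarrow> real^3 \<Rightarrow> real^3 \<Rightarrow> real" where
  "ell_c I1 I2 I3 m M l g chi \<tau> \<sigma> \<rho> Om v Ga =
     Kin_c I1 I2 I3 m M l chi \<tau> \<sigma> \<rho> Om v - g * m * l * (chi \<bullet> Ga)"

definition controlled_eqs ::
  "(real^3 \<Rightarrow> real^3 \<Rightarrow> real^3 \<Rightarrow> real \<Rightarrow> real) \<Rightarrow> (real^3 \<Rightarrow> real^3 \<Rightarrow> real^3 \<Rightarrow> real)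
   \<Rightarrow> real \<Rightarrow> real set \<Rightarrow> (real \<Rightarrow> real^3) \<Rightarrow> (real \<Rightarrow> real^3) \<Rightarrow> (real \<Rightarrow> real^3)
   \<Rightarrow> (real \<Rightarrow> real) \<Rightarrow> bool" where
  "controlled_eqs L Lc c T Om v Ga h \<longleftrightarrow>
     (let dLO = (\<lambda>t. grad (\<lambda>X. L X (v t) (Ga t) (h t)) (Om t));
          dLv = (\<lambda>t. grad (\<lambda>X. L (Om t) X (Ga t) (h t)) (v t));
          dLG = (\<lambda>t. grad (\<lambda>X. L (Om t) (v t) X (h t)) (Ga t));
          dLh = (\<lambda>t. deriv (\<lambda>y. L (Om t) (v t) (Ga t) y) (h t));
          dLcv = (\<lambda>t. grad (\<lambda>X. Lc (Om t) X (Ga t)) (v t));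
          u = (\<lambda>t. vector_derivative (\<lambda>s. dLv s - dLcv s) (at t)
                   - (dLv t - dLcv t) \<times> Om t + c *\<^sub>R Ga t)
      in \<forall>t\<in>T.
           (dLO has_vector_derivative (dLO t \<times> Om t + dLv t \<times> v t + dLG t \<times> Ga t)) (at t)
         \<and> (dLv has_vector_derivative (dLv t \<times> Om t + dLh t *\<^sub>R Ga t + u t)) (at t)
         \<and> (Ga has_vector_derivative (Ga t \<times> Om t)) (at t))"

definition free_eqs ::
  "(real^3 \<Rightarrow> real^3 \<Rightarrow> real^3 \<Rightarrow> real) \<Rightarrow> real set
   \<Rightarrow> (real \<Rightarrow> real^3) \<Rightarrow> (real \<Rightarrow> real^3) \<Rightarrow> (real \<Rightarrow> real^3) \<Rightarrow> bool" where
  "free_eqs Lc T Om v Ga \<longleftrightarrow>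
     (let dO = (\<lambda>t. grad (\<lambda>X. Lc X (v t) (Ga t)) (Om t));
          dv = (\<lambda>t. grad (\<lambda>X. Lc (Om t) X (Ga t)) (v t));
          dG = (\<lambda>t. grad (\<lambda>X. Lc (Om t) (v t) X) (Ga t))
      in \<forall>t\<in>T.
           (dO has_vector_derivative (dO t \<times> Om t + dv t \<times> v t + dG t \<times> Ga t)) (at t)
         \<and> (dv has_vector_derivative (dv t \<times> Om t)) (at t)
         \<and> (Ga has_vector_derivative (Ga t \<times> Om t)) (at t))"

end

theory Submission
  imports Defs
begin

lemma matrix_inv_eqI:
  fixes A B :: "real^3^3"
  assumes "A ** B = mat 1" "B ** A = mat 1"
  shows "matrix_inv A = B"
proof -
  have ex: "\<exists>A'. A ** A' = mat 1 \<and> A' ** A = mat 1" using assms by blast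
  let ?A' = "matrix_inv A"
  have "A ** ?A' = mat 1 \<and> ?A' ** A = mat 1" unfolding matrix_inv_def by (rule someI_ex[OF ex])
  then have "B = B ** (A ** ?A')" by (simp add: matrix_mul_rid)
  also have "\<dots> = ?A'" by (simp add: matrix_mul_assoc assms matrix_mul_lid)
  finally show ?thesis by simp
qed

lemma matrix_inv_scal:
  fixes c :: real assumes "c \<noteq> 0"
  shows "matrix_inv (c *\<^sub>R (mat 1 :: real^3^3)) = (1/c) *\<^sub>R mat 1"
  by (rule matrix_inv_eqI) (simp_all add: assms matrix_scalar_ac matrix_mul_lid)

lemma matrix_inv_inv:
  fixes A :: "real^3^3" assumes "invertible A"
  shows "matrix_inv (matrix_inv A) = A"
proof -
  obtain A' where "A ** A' = mat 1" "A' ** A = mat 1" using assms invertible_def by blast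
  then have "matrix_inv A = A'" by (rule matrix_inv_eqI)
  then show ?thesis using \<open>A ** A' = mat 1\<close> \<open>A' ** A = mat 1\<close> by (simp add: matrix_inv_eqI)
qed

lemma mv_scale: "((a::real) *\<^sub>R (A::real^3^3)) *v x = a *\<^sub>R (A *v x)"
  by (simp add: vec_eq_iff matrix_vector_mult_def sum_3 algebra_simps)
lemma mv_add: "((A::real^3^3) + B) *v x = A *v x + B *v x"
  by (simp add: vec_eq_iff matrix_vector_mult_def sum_3 algebra_simps)
lemma mv_neg: "(- (A::real^3^3)) *v x = - (A *v x)"
  by (simp add: vec_eq_iff matrix_vector_mult_def sum_3 algebra_simps)
lemma mv_radd: "(A::real^3^3) *v (x + y) = A *v x + A *v y"
  by (simp add: vec_eq_iff matrix_vector_mult_def sum_3 algebra_simps)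
lemma mv_rscale: "(A::real^3^3) *v (a *\<^sub>R x) = a *\<^sub>R (A *v x)"
  by (simp add: vec_eq_iff matrix_vector_mult_def sum_3 algebra_simps)
lemma mv_rneg: "(A::real^3^3) *v (- x) = - (A *v x)"
  by (simp add: vec_eq_iff matrix_vector_mult_def sum_3 algebra_simps)
lemma mm_scale: "((a::real) *\<^sub>R (A::real^3^3)) ** B = a *\<^sub>R (A ** B)"
  by (simp add: vec_eq_iff matrix_matrix_mult_def sum_3 algebra_simps)
lemma hat_skew: "(Om::real^3) \<bullet> (hat chi *v X) = - ((hat chi *v Om) \<bullet> X)"
  by (simp add: hat_def inner_vec_def sum_3 matrix_vector_mult_def vector_3 algebra_simps)

lemma Kc_identity:
  fixes c k ml :: real and chi Om X :: "real^3" and B :: "real^3^3"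
  assumes "c \<noteq> 0" "k \<noteq> 0" "c + k \<noteq> 0"
  defines "p \<equiv> 1/c" and "q \<equiv> 1/(c+k)" and "s \<equiv> c*(c+k)/k"
  shows "(let w = X + (((p *\<^sub>R mat 1) ** (-(ml *\<^sub>R hat chi))) + ((q - p) *\<^sub>R (-(ml *\<^sub>R hat chi)))) *v Om
      in (1/2 * (Om \<bullet> (B *v Om)) + Om \<bullet> ((ml *\<^sub>R hat chi) *v (X + ((q - p) *\<^sub>R (-(ml *\<^sub>R hat chi))) *v Om))
     + 1/2 * ((X + ((q - p) *\<^sub>R (-(ml *\<^sub>R hat chi))) *v Om) \<bullet> ((c *\<^sub>R mat 1) *v (X + ((q - p) *\<^sub>R (-(ml *\<^sub>R hat chi))) *v Om))))
         + 1/2 * ((((q - p) *\<^sub>R (-(ml *\<^sub>R hat chi))) *v Om) \<bullet> ((s *\<^sub>R mat 1) *v (((q - p) *\<^sub>R (-(ml *\<^sub>R hat chi))) *v Om)))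
         + 1/2 * (w \<bullet> ((k *\<^sub>R mat 1) *v w)))
    = (1/2 * (Om \<bullet> (B *v Om)) + Om \<bullet> ((ml *\<^sub>R hat chi) *v X)
     + 1/2 * (X \<bullet> ((c *\<^sub>R mat 1) *v X))) + k/2 * (X \<bullet> X)"
proof -
  define y where "y = hat chi *v Om"
  have 1: "Om \<bullet> (hat chi *v y) = - (y \<bullet> y)" unfolding y_def by (rule hat_skew)
  have 2: "Om \<bullet> (hat chi *v X) = - (y \<bullet> X)" unfolding y_def by (rule hat_skew)
  have r1: "c * p = 1" "(c+k) * q = 1" using assms unfolding p_def q_def by auto
  have pq: "p - q = k/(c*(c+k))" using assms unfolding p_def q_def by (simp add: field_simps)
  have r2: "s * (p - q) = 1" using assms unfolding pq s_def by simp
  show ?thesis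
  unfolding Let_def
  apply (simp add: mv_scale mv_add mv_neg mv_radd mv_rscale mv_rneg matrix_vector_mul_assoc[symmetric]
     y_def[symmetric] inner_add_left inner_add_right 1 2 inner_commute[of X y] algebra_simps)
  using r1 r2 by algebra
qed

lemma grad_eqI:
  assumes "GDERIV f x :> D" shows "grad f x = D"
proof -
  have u: "D' = D" if "GDERIV f x :> D'" for D'
  proof -
    have "(\<lambda>h. h \<bullet> D') = (\<lambda>h. h \<bullet> D)"
      using has_derivative_unique that assms unfolding gderiv_def by blast
    then show ?thesis by (metis vector_eq_ldot)
  qed
  show ?thesis unfolding grad_def using assms u by blast
qed

lemma grad_add_const: "grad (\<lambda>x. f x + C) x = grad f x"
proof -
  have "GDERIV (\<lambda>x. f x + C) x :> D \<longleftrightarrow> GDERIV f x :> D" for D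
  proof
    assume "GDERIV (\<lambda>x. f x + C) x :> D"
    then have "GDERIV (\<lambda>x. (f x + C) + (- C)) x :> D"
      unfolding gderiv_def by (rule has_derivative_add_const)
    then show "GDERIV f x :> D" by simp
  next
    assume "GDERIV f x :> D"
    then show "GDERIV (\<lambda>x. f x + C) x :> D"
      unfolding gderiv_def by (rule has_derivative_add_const)
  qed
  then have "(\<lambda>D. GDERIV (\<lambda>x. f x + C) x :> D) = (\<lambda>D. GDERIV f x :> D)" by (rule ext)
  then show ?thesis unfolding grad_def by simp
qed

lemma gderiv_quad:
  fixes w x :: "real^3"
  shows "GDERIV (\<lambda>X. C0 + X \<bullet> w + (b/2) * (X \<bullet> X)) x :> w + b *\<^sub>R x"
  unfolding gderiv_def
  by (rule derivative_eq_intros refl | simp add: inner_add_right inner_commute algebra_simps)+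

lemma step_lemma:
  fixes F P Q v Om Ga :: "real \<Rightarrow> real^3" and a b k :: real
  assumes vd: "(v has_vector_derivative v') (at t)" and ab: "a + b = 0"
  shows "((P has_vector_derivative P t \<times> Om t + F t \<times> v t + Q t \<times> Ga t) (at t) \<and>
          (F has_vector_derivative F t \<times> Om t + a *\<^sub>R Ga t + (vector_derivative (\<lambda>s. F s - (F s + k *\<^sub>R v s)) (at t) - (F t - (F t + k *\<^sub>R v t)) \<times> Om t + b *\<^sub>R Ga t)) (at t) \<and> R)
   = ((P has_vector_derivative P t \<times> Om t + (F t + k *\<^sub>R v t) \<times> v t + Q t \<times> Ga t) (at t) \<and>
      ((\<lambda>t. F t + k *\<^sub>R v t) has_vector_derivative (F t + k *\<^sub>R v t) \<times> Om t) (at t) \<and> R)"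
proof -
  have kv: "((\<lambda>s. k *\<^sub>R v s) has_vector_derivative k *\<^sub>R v') (at t)"
    by (rule bounded_linear.has_vector_derivative[OF bounded_linear_scaleR_right vd])
  have 1: "(F t + k *\<^sub>R v t) \<times> v t = F t \<times> v t" by (simp add: cross_add_left cross_mult_left)
  have "(\<lambda>s. F s - (F s + k *\<^sub>R v s)) = (\<lambda>s. - (k *\<^sub>R v s))" by auto
  moreover have "((\<lambda>s. - (k *\<^sub>R v s)) has_vector_derivative - (k *\<^sub>R v')) (at t)"
    by (rule has_vector_derivative_minus[OF kv])
  ultimately have 2: "vector_derivative (\<lambda>s. F s - (F s + k *\<^sub>R v s)) (at t) = - (k *\<^sub>R v')"
    by (simp add: vector_derivative_at)
  define E where "E = F t \<times> Om t + k *\<^sub>R (v t \<times> Om t) - k *\<^sub>R v'"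
  have 3: "F t \<times> Om t + a *\<^sub>R Ga t + (vector_derivative (\<lambda>s. F s - (F s + k *\<^sub>R v s)) (at t) - (F t - (F t + k *\<^sub>R v t)) \<times> Om t + b *\<^sub>R Ga t) = E"
  proof -
    have bb: "b = - a" using ab by simp
    have ff: "F t - (F t + k *\<^sub>R v t) = - (k *\<^sub>R v t)" by simp
    show ?thesis unfolding 2 ff E_def bb by (simp add: cross_mult_left algebra_simps)
  qed
  have 4: "(F t + k *\<^sub>R v t) \<times> Om t = E + k *\<^sub>R v'"
    unfolding E_def by (simp add: cross_add_left cross_mult_left)
  have 5: "(F has_vector_derivative E) (at t) \<longleftrightarrow> ((\<lambda>t. F t + k *\<^sub>R v t) has_vector_derivative E + k *\<^sub>R v') (at t)"
  proof
    assume "(F has_vector_derivative E) (at t)"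
    then show "((\<lambda>t. F t + k *\<^sub>R v t) has_vector_derivative E + k *\<^sub>R v') (at t)"
      using kv by (rule has_vector_derivative_add)
  next
    assume "((\<lambda>t. F t + k *\<^sub>R v t) has_vector_derivative E + k *\<^sub>R v') (at t)"
    from has_vector_derivative_diff[OF this kv] show "(F has_vector_derivative E) (at t)" by simp
  qed
  show ?thesis unfolding 1 3 4 5 ..
qed

lemma Kin_form: "Kin I1 I2 I3 m M l chi Om X =
   1/2 * (Om \<bullet> (G_OO I1 I2 I3 *v Om)) + X \<bullet> (Om v* G_Ov m l chi) + ((m+M)/2) * (X \<bullet> X)"
proof -
  have "Om \<bullet> (G_Ov m l chi *v X) = X \<bullet> (Om v* G_Ov m l chi)" by (metis dot_lmul_matrix inner_commute)
  then show ?thesis unfolding Kin_def G_vv_def by (simp add: mv_scale)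
qed

lemma mat1_nz: "(mat 1 :: real^3^3) \<noteq> 0"
proof
  assume "(mat 1 :: real^3^3) = 0"
  then have "(mat 1 :: real^3^3) $ 1 $ 1 = 0" by simp
  then show False by (simp add: mat_def)
qed

theorem mainTheorem1:
  fixes I1 I2 I3 m M l g k :: real
    and chi :: "real^3"
    and \<rho> \<sigma> \<tau> :: "real^3^3"
    and T :: "real set"
    and Om v Ga :: "real \<Rightarrow> real^3"
    and h :: "real \<Rightarrow> real"
  assumes "I1 > 0" "I2 > 0" "I3 > 0" "m > 0" "M > 0" "l > 0" "g > 0"
    and "norm chi = 1"
    and "invertible \<rho>" "invertible \<sigma>"
    and MC1: "\<rho> - G_vv m M = k *\<^sub>R mat 1"
    and MC2: "\<tau> = (matrix_inv \<rho> - matrix_inv (G_vv m M)) ** G_vO m l chi"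
    and MC3: "matrix_inv \<sigma> = matrix_inv (G_vv m M) - matrix_inv \<rho>"
    and "open T"
    and "Om C1_differentiable_on T" "v C1_differentiable_on T" "Ga C1_differentiable_on T"
  shows "controlled_eqs (ell I1 I2 I3 m M l g chi) (ell_c I1 I2 I3 m M l g chi \<tau> \<sigma> \<rho>)
           ((m + M) * g) T Om v Ga h
         \<longleftrightarrow> free_eqs (ell_c I1 I2 I3 m M l g chi \<tau> \<sigma> \<rho>) T Om v Ga"
proof -
  define c where "c = m + M"
  have c0: "c \<noteq> 0" using assms(4,5) unfolding c_def by simp
  have Gvv: "G_vv m M = c *\<^sub>R mat 1" unfolding G_vv_def c_def ..
  have rho: "\<rho> = (c + k) *\<^sub>R mat 1" using MC1 unfolding Gvv by (simp add: algebra_simps scaleR_add_left)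
  have ck: "c + k \<noteq> 0"
  proof
    assume "c + k = 0"
    then have "\<rho> = 0" using rho by simp
    then show False using \<open>invertible \<rho>\<close> mat1_nz unfolding invertible_def by auto
  qed
  define p where "p = 1/c"
  define q where "q = 1/(c+k)"
  define s where "s = c*(c+k)/k"
  have iG: "matrix_inv (G_vv m M) = p *\<^sub>R mat 1" unfolding Gvv p_def using c0 by (rule matrix_inv_scal)
  have irho: "matrix_inv \<rho> = q *\<^sub>R mat 1" unfolding rho q_def using ck by (rule matrix_inv_scal)
  have isig: "matrix_inv \<sigma> = (p - q) *\<^sub>R mat 1" using MC3 iG irho by (simp add: scaleR_diff_left)
  have k0: "k \<noteq> 0"
  proof
    assume "k = 0"
    then have "matrix_inv \<sigma> = 0" using isig unfolding p_def q_def by simp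
    moreover have "invertible (matrix_inv \<sigma>)"
      using \<open>invertible \<sigma>\<close> unfolding invertible_def
      by (metis matrix_inv_eqI)
    ultimately show False using mat1_nz unfolding invertible_def by auto
  qed
  have pq: "p - q = k/(c*(c+k))" using c0 ck unfolding p_def q_def by (simp add: field_simps)
  have sig: "\<sigma> = s *\<^sub>R mat 1"
  proof -
    have "\<sigma> = matrix_inv (matrix_inv \<sigma>)" using \<open>invertible \<sigma>\<close> by (simp add: matrix_inv_inv)
    also have "\<dots> = (1/(p-q)) *\<^sub>R mat 1" unfolding isig
      by (rule matrix_inv_scal) (use pq c0 ck k0 in simp)
    also have "1/(p-q) = s" unfolding pq s_def by simp
    finally show ?thesis .
  qed
  have tau: "\<tau> = (q - p) *\<^sub>R (-((m*l) *\<^sub>R hat chi))"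
  proof -
    have "q *\<^sub>R mat 1 - p *\<^sub>R mat 1 = (q-p) *\<^sub>R (mat 1::real^3^3)" by (simp add: scaleR_diff_left)
    then show ?thesis unfolding MC2 irho iG G_vO_def by (simp only: mm_scale matrix_mul_lid)
  qed
  have KEY: "ell_c I1 I2 I3 m M l g chi \<tau> \<sigma> \<rho> W X Gm = ell I1 I2 I3 m M l g chi W X Gm y + g*(m+M)*y + k/2 * (X \<bullet> X)"
    for W X Gm y
  proof -
    have "Kin_c I1 I2 I3 m M l chi \<tau> \<sigma> \<rho> W X = Kin I1 I2 I3 m M l chi W X + k/2 * (X \<bullet> X)"
      unfolding Kin_c_def MC1 iG
      unfolding Kin_def tau sig G_Ov_def G_vO_def Gvv
      unfolding p_def q_def s_def
      by (rule Kc_identity[OF c0 k0 ck])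
    then show ?thesis unfolding ell_c_def ell_def by simp
  qed
  let ?L = "ell I1 I2 I3 m M l g chi" and ?Lc = "ell_c I1 I2 I3 m M l g chi \<tau> \<sigma> \<rho>"
  have gO: "grad (\<lambda>X. ?Lc X (v t) (Ga t)) (Om t) = grad (\<lambda>X. ?L X (v t) (Ga t) (h t)) (Om t)" for t
  proof -
    have "(\<lambda>X. ?Lc X (v t) (Ga t)) = (\<lambda>X. ?L X (v t) (Ga t) (h t) + (g*(m+M)*h t + k/2 * (v t \<bullet> v t)))"
      by (rule ext) (simp add: KEY[where y="h t"] add.assoc)
    then show ?thesis by (simp add: grad_add_const)
  qed
  have gG: "grad (\<lambda>X. ?Lc (Om t) (v t) X) (Ga t) = grad (\<lambda>X. ?L (Om t) (v t) X (h t)) (Ga t)" for t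
  proof -
    have "(\<lambda>X. ?Lc (Om t) (v t) X) = (\<lambda>X. ?L (Om t) (v t) X (h t) + (g*(m+M)*h t + k/2 * (v t \<bullet> v t)))"
      by (rule ext) (simp add: KEY[where y="h t"] add.assoc)
    then show ?thesis by (simp add: grad_add_const)
  qed
  have gv: "grad (\<lambda>X. ?Lc (Om t) X (Ga t)) (v t) = grad (\<lambda>X. ?L (Om t) X (Ga t) (h t)) (v t) + k *\<^sub>R v t" for t
  proof -
    define C1 where "C1 = 1/2 * (Om t \<bullet> (G_OO I1 I2 I3 *v Om t)) - g*m*l*(chi \<bullet> Ga t) - g*(m+M)*h t"
    define w where "w = Om t v* G_Ov m l chi"
    have e1: "(\<lambda>X. ?L (Om t) X (Ga t) (h t)) = (\<lambda>X. C1 + X \<bullet> w + ((m+M)/2) * (X \<bullet> X))"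
      by (rule ext) (simp add: ell_def Kin_form C1_def w_def algebra_simps)
    have e2: "(\<lambda>X. ?Lc (Om t) X (Ga t)) = (\<lambda>X. (C1 + g*(m+M)*h t) + X \<bullet> w + ((m+M+k)/2) * (X \<bullet> X))"
      by (rule ext) (simp add: KEY[where y="h t"] ell_def Kin_form C1_def w_def algebra_simps)
    have "grad (\<lambda>X. ?L (Om t) X (Ga t) (h t)) (v t) = w + (m+M) *\<^sub>R v t"
      unfolding e1 by (rule grad_eqI, rule gderiv_quad)
    moreover have "grad (\<lambda>X. ?Lc (Om t) X (Ga t)) (v t) = w + (m+M+k) *\<^sub>R v t"
      unfolding e2 by (rule grad_eqI, rule gderiv_quad)
    ultimately show ?thesis by (simp add: scaleR_add_left)
  qed
  have dh: "deriv (\<lambda>y. ?L (Om t) (v t) (Ga t) y) (h t) = - (g*(m+M))" for t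
    unfolding ell_def
    by (rule DERIV_imp_deriv) (rule derivative_eq_intros refl | simp)+
  show ?thesis
    unfolding controlled_eqs_def free_eqs_def Let_def
    apply (simp only: gO gG gv dh)
    apply (rule ball_cong[OF refl])
    subgoal for t
    proof -
      assume "t \<in> T"
      have "v differentiable at t"
        using \<open>v C1_differentiable_on T\<close> \<open>t \<in> T\<close> \<open>open T\<close> unfolding C1_differentiable_on_eq by blast
      then have vd: "(v has_vector_derivative vector_derivative v (at t)) (at t)"
        by (rule vector_derivative_works[THEN iffD1])
      have ab: "-(g*(m+M)) + (m+M)*g = 0" by (simp add: algebra_simps)
      show ?thesis
        by (rule step_lemma[where P="\<lambda>t. grad (\<lambda>X. ?L X (v t) (Ga t) (h t)) (Om t)"
           and F = "\<lambda>t. grad (\<lambda>X. ?L (Om t) X (Ga t) (h t)) (v t)"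
           and Q = "\<lambda>t. grad (\<lambda>X. ?L (Om t) (v t) X (h t)) (Ga t)"
           and a = "-(g*(m+M))" and b = "(m+M)*g" and k = k and Om = Om and Ga = Ga
           and R = "(Ga has_vector_derivative Ga t \<times> Om t) (at t)", OF vd ab])
    qed
    done
qed
end
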